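(* If $\{(0,1),(1,1)\}\subset\mathcal{Z}_0$, then $S_\infty=\mathbb{L}^2$.
   Context: $\mathbb{L}^2=\{w\in L^2([0,2\pi]^2_{\mathrm{per}};\mathbb{R}):\int w\,dx=0\}$. $\mathbb{Z}^2_+=\{(j_1,j_2)\in\mathbb{Z}^2:j_2>0\}\cup\{(j_1,0):j_1>0\}$, $\mathbb{Z}^2_-=-\mathbb{Z}^2_+$, $\mathbb{Z}^2_0=\mathbb{Z}^2_+\cup\mathbb{Z}^2_-$; $e_k(x)=\sin(k\cdot x)$ for $k\in\mathbb{Z}^2_+$, $e_k(x)=\cos(k\cdot x)$ for $k\in\mathbb{Z}^2_-$. Given a finite set $\mathcal{Z}_*\subset\mathbb{Z}^2_0$ (the forced modes), define $\mathcal{Z}_0=\mathcal{Z}_*\cap(-\mathcal{Z}_* )$, for $n\ge1$ $\mathcal{Z}_n=\{\ell+j\in\mathbb{Z}^2_0: j\in\mathcal{Z}_0,\ \ell\in\mathcal{Z}_{n-1},\ \ell^\perp\cdot j\neq0,\ |j|\neq|\ell|\}$ where $\ell^\perp=(-\ell_2,\ell_1)$ and $|\cdot|$ is the Euclidean norm, $\mathcal{Z}_\infty=\bigcup_{n\ge1}\mathcal{Z}_n$, and $S_\infty$ the closed linear span in $\mathbb{L}^2$ of $\{e_k:k\in\mathcal{Z}_\infty\cup\mathcal{Z}_*\}$. *)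

theory Defs
  imports "HOL-Analysis.Analysis"
begin

type_synonym lattice_pt = "int \<times> int"

definition Zplus :: "lattice_pt set" where
  "Zplus = {(j1, j2). j2 > 0} \<union> {(j1, j2). j2 = 0 \<and> j1 > 0}"

definition Zminus :: "lattice_pt set" where
  "Zminus = uminus ` Zplus"

definition Zzero :: "lattice_pt set" where
  "Zzero = Zplus \<union> Zminus"

definition perp :: "lattice_pt \<Rightarrow> lattice_pt" where
  "perp l = (- snd l, fst l)"

definition idot :: "lattice_pt \<Rightarrow> lattice_pt \<Rightarrow> int" where
  "idot a b = fst a * fst b + snd a * snd b"

definition inorm :: "lattice_pt \<Rightarrow> real" where
  "inorm k = sqrt (real_of_int (fst k ^ 2 + snd k ^ 2))"

definition ek :: "lattice_pt \<Rightarrow> real \<times> real \<Rightarrow> real" where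
  "ek k x = (let t = real_of_int (fst k) * fst x + real_of_int (snd k) * snd x
             in if k \<in> Zplus then sin t else cos t)"

definition Z0 :: "lattice_pt set \<Rightarrow> lattice_pt set" where
  "Z0 Zs = Zs \<inter> uminus ` Zs"

primrec Zn :: "lattice_pt set \<Rightarrow> nat \<Rightarrow> lattice_pt set" where
  "Zn Zs 0 = Z0 Zs"
| "Zn Zs (Suc n) = {l + j | l j. l + j \<in> Zzero \<and> j \<in> Z0 Zs \<and> l \<in> Zn Zs n
                        \<and> idot (perp l) j \<noteq> 0 \<and> inorm j \<noteq> inorm l}"

definition Zinf :: "lattice_pt set \<Rightarrow> lattice_pt set" where
  "Zinf Zs = (\<Union>n\<in>{1..}. Zn Zs n)"

definition torus_box :: "(real \<times> real) set" where
  "torus_box = {0..2*pi} \<times> {0..2*pi}"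

definition L2zero :: "(real \<times> real \<Rightarrow> real) set" where
  "L2zero = {w. set_borel_measurable lebesgue torus_box w
               \<and> set_integrable lebesgue torus_box (\<lambda>x. (w x)^2)
               \<and> (LINT x:torus_box|lebesgue. w x) = 0}"

definition L2_closed_span :: "lattice_pt set \<Rightarrow> (real \<times> real \<Rightarrow> real) set" where
  "L2_closed_span K = {f \<in> L2zero. \<forall>\<epsilon>>0. \<exists>F c. finite F \<and> F \<subseteq> K \<and>
        (LINT x:torus_box|lebesgue. (f x - (\<Sum>k\<in>F. c k * ek k x))^2) < \<epsilon>}"

definition S_infty :: "lattice_pt set \<Rightarrow> (real \<times> real \<Rightarrow> real) set" where
  "S_infty Zs = L2_closed_span (Zinf Zs \<union> Zs)"

end

theory Submission
  imports Defs
begin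

lemma Zplus_iff: "(a, b) \<in> Zplus \<longleftrightarrow> b > 0 \<or> (b = 0 \<and> a > 0)"
  by (auto simp: Zplus_def)

lemma Zminus_iff: "(a, b) \<in> Zminus \<longleftrightarrow> b < 0 \<or> (b = 0 \<and> a < 0)"
proof
  assume "(a, b) \<in> Zminus"
  then obtain p where "p \<in> Zplus" "(a,b) = - p" by (auto simp: Zminus_def)
  then show "b < 0 \<or> (b = 0 \<and> a < 0)" by (cases p) (auto simp: Zplus_iff)
next
  assume "b < 0 \<or> (b = 0 \<and> a < 0)"
  then have "(-a, -b) \<in> Zplus" by (auto simp: Zplus_iff)
  moreover have "(a, b) = - (-a, -b)" by simp
  ultimately show "(a, b) \<in> Zminus" unfolding Zminus_def by blast
qed

lemma Zzero_iff: "k \<in> Zzero \<longleftrightarrow> k \<noteq> 0"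
  by (cases k) (auto simp: Zzero_def Zplus_iff Zminus_iff zero_prod_def)

lemma Zinf_step:
  assumes "l \<in> Zinf Zs" "j \<in> Z0 Zs" "l + j \<noteq> 0" "idot (perp l) j \<noteq> 0" "inorm j \<noteq> inorm l"
  shows "l + j \<in> Zinf Zs"
proof -
  from assms(1) obtain n where n: "n \<ge> 1" "l \<in> Zn Zs n" by (auto simp: Zinf_def)
  have "l + j \<in> Zzero" using assms by (simp add: Zzero_iff)
  then have "l + j \<in> Zn Zs (Suc n)" unfolding Zn.simps using n assms by blast
  then show ?thesis unfolding Zinf_def by (intro UN_I[of "Suc n"]) auto
qed

lemma inorm_eq_iff: "inorm a = inorm b \<longleftrightarrow> fst a ^ 2 + snd a ^ 2 = fst b ^ 2 + snd b ^ 2"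
proof -
  have "inorm a = inorm b \<longleftrightarrow> real_of_int (fst a ^ 2 + snd a ^ 2) = real_of_int (fst b ^ 2 + snd b ^ 2)"
    unfolding inorm_def by (subst real_sqrt_eq_iff) (auto)
  also have "\<dots> \<longleftrightarrow> fst a ^ 2 + snd a ^ 2 = fst b ^ 2 + snd b ^ 2" by (rule of_int_eq_iff)
  finally show ?thesis .
qed

lemma int_sq_small: "(a::int)^2 \<le> 2 \<Longrightarrow> a = -1 \<or> a = 0 \<or> a = 1"
proof -
  assume h: "a^2 \<le> 2"
  have "\<not> a \<ge> 2"
  proof
    assume "a \<ge> 2" then have "a * a \<ge> 2 * 2" using mult_mono[of 2 a 2 a] by simp
    then show False using h by (simp add: power2_eq_square)
  qed
  moreover have "\<not> a \<le> -2"
  proof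
    assume "a \<le> -2" then have "(-a) * (-a) \<ge> 2 * 2" using mult_mono[of 2 "-a" 2 "-a"] by simp
    then show False using h by (simp add: power2_eq_square)
  qed
  ultimately show ?thesis by linarith
qed

lemma sq2_aux: "a - b \<notin> {0, 2, -2} \<Longrightarrow> a^2 + b^2 \<noteq> (2::int)"
proof
  assume h: "a - b \<notin> {0, 2, -2}" "a^2 + b^2 = 2"
  have "a^2 \<le> 2" "b^2 \<le> 2" using h(2) zero_le_power2[of a] zero_le_power2[of b] by linarith+
  then have "a = -1 \<or> a = 0 \<or> a = 1" "b = -1 \<or> b = 0 \<or> b = 1" using int_sq_small by blast+
  then show False using h by auto
qed

lemma comb_main:
  assumes "{(0, 1), (1, 1)} \<subseteq> Z0 Zs"
  shows "Zzero \<subseteq> Zinf Zs"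
proof -
  have Z0s: "(0,1) \<in> Z0 Zs" "(1,1) \<in> Z0 Zs" using assms by auto
  have Z0neg: "- j \<in> Z0 Zs" if "j \<in> Z0 Zs" for j
    using that unfolding Z0_def by (auto simp: image_iff)
  have J: "(0,1) \<in> Z0 Zs" "(1,1) \<in> Z0 Zs" "(0,-1) \<in> Z0 Zs" "(-1,-1) \<in> Z0 Zs"
    using Z0s Z0neg[OF Z0s(1)] Z0neg[OF Z0s(2)] by auto
  let ?R = "Zinf Zs"
  have step: "(a + c, b + d) \<in> ?R"
    if "(a, b) \<in> ?R" "(c, d) \<in> Z0 Zs" "(a + c, b + d) \<noteq> (0, 0)" "a * d - b * c \<noteq> 0"
       "c^2 + d^2 \<noteq> a^2 + b^2" for a b c d
    using Zinf_step[OF that(1,2)] that(3-5)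
    by (auto simp: idot_def perp_def inorm_eq_iff zero_prod_def)
  have up: "(a, b + 1) \<in> ?R" if "(a, b) \<in> ?R" "a \<noteq> 0" "a^2 + b^2 \<noteq> 1" for a b
    using step[OF that(1) J(1)] that by (auto simp: algebra_simps)
  have down: "(a, b - 1) \<in> ?R" if "(a, b) \<in> ?R" "a \<noteq> 0" "a^2 + b^2 \<noteq> 1" for a b
    using step[OF that(1) J(3)] that by (auto simp: algebra_simps)
  have dup: "(a + 1, b + 1) \<in> ?R" if "(a, b) \<in> ?R" "a \<noteq> b" "a^2 + b^2 \<noteq> 2" for a b
    using step[OF that(1) J(2)] that by (auto simp: algebra_simps)
  have ddown: "(a - 1, b - 1) \<in> ?R" if "(a, b) \<in> ?R" "a \<noteq> b" "a^2 + b^2 \<noteq> 2" for a b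
    using step[OF that(1) J(4)] that by (auto simp: algebra_simps)
  have Z1: "(1::int, 0::int) \<in> Zn Zs 1"
  proof -
    have "(1::int,1::int) \<in> Zn Zs 0" using J by simp
    moreover have "(1::int,1::int) + (0,-1) \<in> Zzero" by (simp add: Zzero_iff zero_prod_def)
    moreover have "idot (perp (1,1)) (0::int,-1::int) \<noteq> 0" by (simp add: idot_def perp_def)
    moreover have "inorm (0::int,-1::int) \<noteq> inorm (1,1)" by (simp add: inorm_eq_iff)
    ultimately have "(1::int,1::int) + (0,-1) \<in> Zn Zs (Suc 0)"
      unfolding Zn.simps(2) using J by blast
    then show ?thesis by simp
  qed
  have R10: "(1, 0) \<in> ?R" unfolding Zinf_def by (rule UN_I[of 1]) (simp, rule Z1)
  have R21: "(2, 1) \<in> ?R" using dup[OF R10] by simp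
  have vert2: "(2, 1 + int n) \<in> ?R \<and> (2, 1 - int n) \<in> ?R" for n
  proof (induction n)
    case 0 then show ?case using R21 by simp
  next
    case (Suc n)
    have a1: "(2::int)^2 + (1 + int n)^2 \<noteq> 1" using zero_le_power2[of "1 + int n"] by (simp, linarith)
    have a2: "(2::int)^2 + (1 - int n)^2 \<noteq> 1" using zero_le_power2[of "1 - int n"] by (simp, linarith)
    note a = a1 a2
    have "(2, 1 + int n + 1) \<in> ?R" using up[OF conjunct1[OF Suc.IH] _ a1] by simp
    moreover have "(2, 1 - int n - 1) \<in> ?R" using down[OF conjunct2[OF Suc.IH] _ a2] by simp
    ultimately show ?case by (simp add: algebra_simps)
  qed
  have vert2': "(2, y) \<in> ?R" for y
  proof (cases "y \<ge> 1")
    case True then show ?thesis using vert2[of "nat (y - 1)"] by auto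
  next
    case False then show ?thesis using vert2[of "nat (1 - y)"] by auto
  qed
  have sq2: "a^2 + b^2 \<noteq> (2::int)" if "a - b \<notin> {0, 2, -2}" for a b
    using sq2_aux that by blast
  have diag: "(2 + int n, 2 + int n - d) \<in> ?R \<and> (2 - int n, 2 - int n - d) \<in> ?R"
    if "d \<notin> {0, 2, -2}" for d n
  proof (induction n)
    case 0 then show ?case using vert2' by simp
  next
    case (Suc n)
    then have "(2 + int n + 1, 2 + int n - d + 1) \<in> ?R" "(2 - int n - 1, 2 - int n - d - 1) \<in> ?R"
      using dup[of "2 + int n" "2 + int n - d"] ddown[of "2 - int n" "2 - int n - d"] that sq2
      by auto
    then show ?case by (simp add: algebra_simps)
  qed
  have good: "(x, y) \<in> ?R" if "x - y \<notin> {0, 2, -2}" for x y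
  proof (cases "x \<ge> 2")
    case True then show ?thesis using diag[OF that, of "nat (x - 2)"] by auto
  next
    case False then show ?thesis using diag[OF that, of "nat (2 - x)"] by auto
  qed
  have nz: "(x, y) \<in> ?R" if "x \<noteq> 0" for x y
  proof (cases "x - y \<in> {0, 2, -2}")
    case False then show ?thesis using good by blast
  next
    case True
    show ?thesis
    proof (cases "(x, y) = (1, 1) \<or> (x, y) = (-1, 1)")
      case False
      have "(x, y - 1) \<in> ?R" using good True by auto
      moreover have "x^2 + (y-1)^2 \<noteq> 1"
      proof
        assume h: "x^2 + (y-1)^2 = 1"
        have "1 \<le> \<bar>x\<bar>" using that by arith
        then have "1 \<le> \<bar>x\<bar>^2" by (rule one_le_power)
        then have "x^2 \<ge> 1" by simp
        have "(y-1)^2 \<ge> 0" by simp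
        then have "(y-1)^2 = 0" "x^2 = 1" using h \<open>x^2 \<ge> 1\<close> by linarith+
        then have "y = 1" "x = 1 \<or> x = -1" by (auto simp: power2_eq_1_iff)
        then show False using False by auto
      qed
      ultimately show ?thesis using up[of x "y - 1"] that by auto
    next
      case True2: True
      have "(x, y + 1) \<in> ?R" using good True2 by auto
      moreover have "x^2 + (y+1)^2 \<noteq> 1" using True2 by auto
      ultimately show ?thesis using down[of x "y + 1"] that by auto
    qed
  qed
  have zero: "(0, y) \<in> ?R" if "y \<noteq> 0" for y
  proof (cases "y = 2")
    case True
    have "(1, 3) \<in> ?R" using nz by auto
    from ddown[OF this] show ?thesis using True by simp
  next
    case False
    have "(-1, y - 1) \<in> ?R" using nz by auto
    moreover have "(-1)^2 + (y - 1)^2 \<noteq> (2::int)"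
    proof
      assume "(-1)^2 + (y - 1)^2 = (2::int)"
      then have "(y-1)^2 = 1" by simp
      then have "y - 1 = 1 \<or> y - 1 = -1" by (simp add: power2_eq_1_iff)
      then show False using False that by auto
    qed
    ultimately show ?thesis using dup[of "-1" "y - 1"] that by auto
  qed
  show ?thesis
  proof
    fix k assume "k \<in> Zzero"
    then have "k \<noteq> 0" by (simp add: Zzero_iff)
    obtain a b where k: "k = (a, b)" by (cases k)
    show "k \<in> ?R"
    proof (cases "a = 0")
      case True then show ?thesis using zero[of b] k \<open>k \<noteq> 0\<close> by (simp add: zero_prod_def)
    next
      case False then show ?thesis using nz k by simp
    qed
  qed
qed

definition kdot :: "int \<times> int \<Rightarrow> real \<times> real \<Rightarrow> real" where
  "kdot k x = real_of_int (fst k) * fst x + real_of_int (snd k) * snd x"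

lemma kdot_add: "kdot (k + k') x = kdot k x + kdot k' x"
  by (simp add: kdot_def algebra_simps)
lemma kdot_diff: "kdot (k - k') x = kdot k x - kdot k' x"
  by (simp add: kdot_def algebra_simps)
lemma kdot_minus: "kdot (- k) x = - kdot k x"
  by (simp add: kdot_def algebra_simps)
lemma kdot_zero: "kdot 0 x = 0"
  by (simp add: kdot_def)

lemma ek_kdot: "ek k x = (if k \<in> Zplus then sin (kdot k x) else cos (kdot k x))"
  by (simp add: ek_def kdot_def Let_def)

inductive tp :: "(real \<times> real \<Rightarrow> real) \<Rightarrow> bool" where
  tp_const: "tp (\<lambda>x. c)"
| tp_cos: "tp (\<lambda>x. c * cos (kdot k x))"
| tp_sin: "tp (\<lambda>x. c * sin (kdot k x))"
| tp_add: "tp f \<Longrightarrow> tp g \<Longrightarrow> tp (\<lambda>x. f x + g x)"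

lemma tp_scale: "tp f \<Longrightarrow> tp (\<lambda>x. a * f x)"
proof (induction rule: tp.induct)
  case (tp_const c) then show ?case using tp.tp_const by blast
next
  case (tp_cos c k) then show ?case using tp.tp_cos[of "a * c" k] by (simp add: mult.assoc)
next
  case (tp_sin c k) then show ?case using tp.tp_sin[of "a * c" k] by (simp add: mult.assoc)
next
  case (tp_add f g) then show ?case using tp.tp_add[of "\<lambda>x. a * f x" "\<lambda>x. a * g x"] by (simp add: distrib_left)
qed

lemma cc: "(c::real) * cos (a::real) * (d * cos b) = (c*d/2) * cos (a - b) + (c*d/2) * cos (a + b)"
  by (simp add: cos_add cos_diff field_simps)
lemma cs: "(c::real) * cos (a::real) * (d * sin b) = (c*d/2) * sin (a + b) + (- c*d/2) * sin (a - b)"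
  by (simp add: sin_add sin_diff field_simps)
lemma sc: "(c::real) * sin (a::real) * (d * cos b) = (c*d/2) * sin (a + b) + (c*d/2) * sin (a - b)"
  by (simp add: sin_add sin_diff field_simps)
lemma ss: "(c::real) * sin (a::real) * (d * sin b) = (c*d/2) * cos (a - b) + (- c*d/2) * cos (a + b)"
  by (simp add: cos_add cos_diff field_simps)

lemma tp_cos_cos: "tp (\<lambda>x. c * cos (kdot k x) * (d * cos (kdot k' x)))"
proof -
  have "(\<lambda>x. c * cos (kdot k x) * (d * cos (kdot k' x))) =
        (\<lambda>x. (c*d/2) * cos (kdot (k - k') x) + (c*d/2) * cos (kdot (k + k') x))"
    by (rule ext) (simp only: kdot_add kdot_diff cc)
  then show ?thesis by (simp only:) (rule tp_add[OF tp_cos tp_cos])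
qed

lemma tp_cos_sin: "tp (\<lambda>x. c * cos (kdot k x) * (d * sin (kdot k' x)))"
proof -
  have "(\<lambda>x. c * cos (kdot k x) * (d * sin (kdot k' x))) =
        (\<lambda>x. (c*d/2) * sin (kdot (k + k') x) + (- c*d/2) * sin (kdot (k - k') x))"
    by (rule ext) (simp only: kdot_add kdot_diff cs)
  then show ?thesis by (simp only:) (rule tp_add[OF tp_sin tp_sin])
qed

lemma tp_sin_cos: "tp (\<lambda>x. c * sin (kdot k x) * (d * cos (kdot k' x)))"
proof -
  have "(\<lambda>x. c * sin (kdot k x) * (d * cos (kdot k' x))) =
        (\<lambda>x. (c*d/2) * sin (kdot (k + k') x) + (c*d/2) * sin (kdot (k - k') x))"
    by (rule ext) (simp only: kdot_add kdot_diff sc)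
  then show ?thesis by (simp only:) (rule tp_add[OF tp_sin tp_sin])
qed

lemma tp_sin_sin: "tp (\<lambda>x. c * sin (kdot k x) * (d * sin (kdot k' x)))"
proof -
  have "(\<lambda>x. c * sin (kdot k x) * (d * sin (kdot k' x))) =
        (\<lambda>x. (c*d/2) * cos (kdot (k - k') x) + (- c*d/2) * cos (kdot (k + k') x))"
    by (rule ext) (simp only: kdot_add kdot_diff ss)
  then show ?thesis by (simp only:) (rule tp_add[OF tp_cos tp_cos])
qed

lemma tp_mult_cos: "tp f \<Longrightarrow> tp (\<lambda>x. c * cos (kdot k x) * f x)"
proof (induction rule: tp.induct)
  case (tp_const d) then show ?case using tp.tp_cos[of "c * d" k] by (simp add: algebra_simps)
next
  case (tp_cos d k') then show ?case by (rule tp_cos_cos)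
next
  case (tp_sin d k') then show ?case by (rule tp_cos_sin)
next
  case (tp_add f g) then show ?case using tp.tp_add[OF tp_add.IH] by (simp add: distrib_left)
qed

lemma tp_mult_sin: "tp f \<Longrightarrow> tp (\<lambda>x. c * sin (kdot k x) * f x)"
proof (induction rule: tp.induct)
  case (tp_const d) then show ?case using tp.tp_sin[of "c * d" k] by (simp add: algebra_simps)
next
  case (tp_cos d k') then show ?case by (rule tp_sin_cos)
next
  case (tp_sin d k') then show ?case by (rule tp_sin_sin)
next
  case (tp_add f g) then show ?case using tp.tp_add[OF tp_add.IH] by (simp add: distrib_left)
qed

lemma tp_mult: "tp f \<Longrightarrow> tp g \<Longrightarrow> tp (\<lambda>x. f x * g x)"
proof (induction rule: tp.induct)
  case (tp_const c) then show ?case by (rule tp_scale)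
next
  case (tp_cos c k) then show ?case by (rule tp_mult_cos)
next
  case (tp_sin c k) then show ?case by (rule tp_mult_sin)
next
  case (tp_add f1 f2) then show ?case using tp.tp_add[OF tp_add.IH] by (simp add: distrib_right)
qed


definition phi :: "real \<times> real \<Rightarrow> (real \<times> real) \<times> (real \<times> real)" where
  "phi x = ((cos (fst x), sin (fst x)), (cos (snd x), sin (snd x)))"

lemma tp_poly:
  fixes P :: "(real \<times> real) \<times> (real \<times> real) \<Rightarrow> real"
  assumes "real_polynomial_function P"
  shows "tp (\<lambda>x. P (phi x))"
  using assms
proof (induction rule: real_polynomial_function.induct)
  case (linear f)
  then interpret bounded_linear f .
  have dec: "f ((a, b), (c, d)) = a * f ((1,0),(0,0)) + b * f ((0,1),(0,0)) + c * f ((0,0),(1,0)) + d * f ((0,0),(0,1))"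
    for a b c d
  proof -
    have "((a, b), (c, d)) = a *\<^sub>R ((1,0),(0,0)) + b *\<^sub>R ((0,1),(0,0)) + c *\<^sub>R ((0,0),(1,0)) + d *\<^sub>R ((0,0),(0,1))"
      by simp
    then show ?thesis
      by (simp only: linear_add[OF linear] linear_scale[OF linear] real_scaleR_def)
  qed
  have k1: "kdot (1,0) x = fst x" "kdot (0,1) x = snd x" for x by (simp_all add: kdot_def)
  have "(\<lambda>x. f (phi x)) = (\<lambda>x. f ((1,0),(0,0)) * cos (kdot (1,0) x) + f ((0,1),(0,0)) * sin (kdot (1,0) x)
         + f ((0,0),(1,0)) * cos (kdot (0,1) x) + f ((0,0),(0,1)) * sin (kdot (0,1) x))"
    apply (rule ext)
    apply (simp only: phi_def)
    apply (subst dec)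
    apply (simp add: k1 mult.commute)
    done
  then show ?case by (simp only:) (intro tp.tp_add tp.tp_cos tp.tp_sin)
next
  case (const c) then show ?case by (rule tp_const)
next
  case (add f g) show ?case by (rule tp_add[OF add.IH])
next
  case (mult f g) show ?case by (rule tp_mult[OF mult.IH])
qed

lemma Zplus_neg: "k \<in> Zplus \<Longrightarrow> - k \<notin> Zplus"
  by (cases k) (auto simp: Zplus_iff)
lemma Zplus_neg2: "k \<noteq> 0 \<Longrightarrow> k \<notin> Zplus \<Longrightarrow> - k \<in> Zplus"
  by (cases k) (auto simp: Zplus_iff zero_prod_def)

lemma tp_repr:
  assumes "tp p"
  shows "\<exists>c0 F c. finite F \<and> F \<subseteq> Zzero \<and> (\<forall>x. p x = c0 + (\<Sum>k\<in>F. c k * ek k x))"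
  using assms
proof (induction rule: tp.induct)
  case (tp_const c)
  show ?case by (rule exI[of _ c], rule exI[of _ "{}"]) simp
next
  case (tp_cos c k)
  show ?case
  proof (cases "k = 0")
    case True then show ?thesis
      by (intro exI[of _ c] exI[of _ "{}"]) (simp add: kdot_zero)
  next
    case False
    show ?thesis
    proof (cases "k \<in> Zplus")
      case True
      have "-k \<in> Zzero" using False by (simp add: Zzero_iff)
      moreover have "ek (-k) x = cos (kdot k x)" for x
        using Zplus_neg[OF True] by (simp add: ek_kdot kdot_minus)
      ultimately show ?thesis
        by (intro exI[of _ 0] exI[of _ "{-k}"] exI[of _ "\<lambda>_. c"]) simp
    next
      case False2: False
      have "k \<in> Zzero" using False by (simp add: Zzero_iff)
      moreover have "ek k x = cos (kdot k x)" for x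
        using False2 by (simp add: ek_kdot)
      ultimately show ?thesis
        by (intro exI[of _ 0] exI[of _ "{k}"] exI[of _ "\<lambda>_. c"]) simp
    qed
  qed
next
  case (tp_sin c k)
  show ?case
  proof (cases "k = 0")
    case True then show ?thesis
      by (intro exI[of _ 0] exI[of _ "{}"]) (simp add: kdot_zero)
  next
    case False
    show ?thesis
    proof (cases "k \<in> Zplus")
      case True
      have "k \<in> Zzero" using False by (simp add: Zzero_iff)
      moreover have "ek k x = sin (kdot k x)" for x
        using True by (simp add: ek_kdot)
      ultimately show ?thesis
        by (intro exI[of _ 0] exI[of _ "{k}"] exI[of _ "\<lambda>_. c"]) simp
    next
      case False2: False
      have "-k \<in> Zzero" using False by (simp add: Zzero_iff)
      moreover have "ek (-k) x = - sin (kdot k x)" for x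
        using Zplus_neg2[OF False False2] by (simp add: ek_kdot kdot_minus)
      ultimately show ?thesis
        by (intro exI[of _ 0] exI[of _ "{-k}"] exI[of _ "\<lambda>_. - c"]) simp
    qed
  qed
next
  case (tp_add f g)
  from tp_add.IH(1) obtain c1 F1 d1 where 1: "finite F1" "F1 \<subseteq> Zzero" "\<forall>x. f x = c1 + (\<Sum>k\<in>F1. d1 k * ek k x)"
    by blast
  from tp_add.IH(2) obtain c2 F2 d2 where 2: "finite F2" "F2 \<subseteq> Zzero" "\<forall>x. g x = c2 + (\<Sum>k\<in>F2. d2 k * ek k x)"
    by blast
  define d where "d k = (if k \<in> F1 then d1 k else 0) + (if k \<in> F2 then d2 k else 0)" for k
  have "(\<Sum>k\<in>F1 \<union> F2. d k * ek k x) = (\<Sum>k\<in>F1. d1 k * ek k x) + (\<Sum>k\<in>F2. d2 k * ek k x)" for x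
  proof -
    have s1: "(\<Sum>k\<in>F1 \<union> F2. (if k \<in> F1 then d1 k else 0) * ek k x) = (\<Sum>k\<in>F1. d1 k * ek k x)"
      by (rule sum.mono_neutral_cong_right) (use 1 2 in auto)
    have s2: "(\<Sum>k\<in>F1 \<union> F2. (if k \<in> F2 then d2 k else 0) * ek k x) = (\<Sum>k\<in>F2. d2 k * ek k x)"
      by (rule sum.mono_neutral_cong_right) (use 1 2 in auto)
    have "(\<Sum>k\<in>F1 \<union> F2. d k * ek k x) = (\<Sum>k\<in>F1 \<union> F2. (if k \<in> F1 then d1 k else 0) * ek k x)
           + (\<Sum>k\<in>F1 \<union> F2. (if k \<in> F2 then d2 k else 0) * ek k x)"
      unfolding d_def distrib_right by (rule sum.distrib)
    then show ?thesis using s1 s2 by simp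
  qed
  then show ?case using 1 2
    by (intro exI[of _ "c1 + c2"] exI[of _ "F1 \<union> F2"] exI[of _ d]) auto
qed

lemma TB_eq: "torus_box = cbox (0,0) (2*pi, 2*pi)"
  by (simp add: torus_box_def cbox_Pair_eq)

lemma TB_lmeas: "torus_box \<in> lmeasurable"
  unfolding TB_eq by (rule lmeasurable_cbox)

lemma TB_sets: "torus_box \<in> sets lebesgue"
  using TB_lmeas unfolding fmeasurable_def by blast

lemma TB_fin: "emeasure lebesgue torus_box < \<infinity>"
  using TB_lmeas unfolding fmeasurable_def by blast

lemma TB_compact: "compact torus_box"
  unfolding TB_eq by (rule compact_cbox)

lemma cont_lebesgue:
  fixes f :: "real \<times> real \<Rightarrow> real"
  shows "continuous_on UNIV f \<Longrightarrow> f \<in> borel_measurable lebesgue"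
  using continuous_imp_measurable_on_sets_lebesgue[of UNIV f] by (simp add: lebesgue_on_UNIV_eq)

lemma sbm_of_bm:
  fixes f :: "real \<times> real \<Rightarrow> real"
  shows "f \<in> borel_measurable lebesgue \<Longrightarrow> set_borel_measurable lebesgue torus_box f"
  unfolding set_borel_measurable_def using TB_sets
  by (intro borel_measurable_scaleR borel_measurable_indicator) auto

lemma sbm_diff:
  fixes f g :: "real \<times> real \<Rightarrow> real"
  assumes "set_borel_measurable M A f" "set_borel_measurable M A g"
  shows "set_borel_measurable M A (\<lambda>x. f x - g x)"
proof -
  have "(\<lambda>x. indicator A x *\<^sub>R (f x - g x)) = (\<lambda>x. indicator A x *\<^sub>R f x - indicator A x *\<^sub>R g x)"
    by (simp add: algebra_simps)
  then show ?thesis using assms unfolding set_borel_measurable_def by simp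
qed

lemma sbm_add:
  fixes f g :: "real \<times> real \<Rightarrow> real"
  assumes "set_borel_measurable M A f" "set_borel_measurable M A g"
  shows "set_borel_measurable M A (\<lambda>x. f x + g x)"
proof -
  have "(\<lambda>x. indicator A x *\<^sub>R (f x + g x)) = (\<lambda>x. indicator A x *\<^sub>R f x + indicator A x *\<^sub>R g x)"
    by (simp add: algebra_simps)
  then show ?thesis using assms unfolding set_borel_measurable_def by simp
qed

lemma sbm_comp0:
  fixes f :: "real \<times> real \<Rightarrow> real"
  assumes "set_borel_measurable M A f" "continuous_on UNIV g" "g 0 = (0::real)"
  shows "set_borel_measurable M A (\<lambda>x. g (f x))"
proof -
  have "(\<lambda>x. indicator A x *\<^sub>R g (f x)) = (\<lambda>x. g (indicator A x *\<^sub>R f x))"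
    by (rule ext) (simp add: indicator_def assms(3))
  moreover have "g \<in> borel_measurable borel" using assms(2) by (rule borel_measurable_continuous_onI)
  ultimately show ?thesis using assms(1) unfolding set_borel_measurable_def
    by (simp add: measurable_compose[of _ M borel g])
qed

lemma const_si: "set_integrable lebesgue torus_box (\<lambda>x. c::real)"
  unfolding set_integrable_def using TB_sets TB_fin
  by (simp add: integrable_mult_left)

lemma bdd_si:
  fixes f :: "real \<times> real \<Rightarrow> real"
  assumes "set_borel_measurable lebesgue torus_box f" "\<And>x. x \<in> torus_box \<Longrightarrow> \<bar>f x\<bar> \<le> C"
  shows "set_integrable lebesgue torus_box f"
proof (rule set_integrable_bound[OF const_si[of C] assms(1)])
  show "AE x in lebesgue. x \<in> torus_box \<longrightarrow> norm (f x) \<le> norm C"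
    using assms(2) by (intro AE_I2) (force)
qed

definition L2B :: "(real \<times> real \<Rightarrow> real) \<Rightarrow> bool" where
  "L2B u \<longleftrightarrow> set_borel_measurable lebesgue torus_box u \<and> set_integrable lebesgue torus_box (\<lambda>x. (u x)^2)"

abbreviation NN :: "(real \<times> real \<Rightarrow> real) \<Rightarrow> real" where
  "NN u \<equiv> (LINT x:torus_box|lebesgue. (u x)^2)"

lemma sq_diff_le: "((a::real) - b)^2 \<le> 2 * a^2 + 2 * b^2"
proof -
  have "0 \<le> (a + b)^2" by simp
  moreover have "(a - b)^2 + (a + b)^2 = 2 * a^2 + 2 * b^2" by (simp add: power2_eq_square algebra_simps)
  ultimately show ?thesis by linarith
qed

lemma sq_add_le: "((a::real) + b)^2 \<le> 2 * a^2 + 2 * b^2"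
  using sq_diff_le[of a "-b"] by simp

lemma L2B_sq_sbm: "set_borel_measurable lebesgue torus_box (u :: real \<times> real \<Rightarrow> real) \<Longrightarrow> set_borel_measurable lebesgue torus_box (\<lambda>x. (u x)^2)"
proof -
  assume a: "set_borel_measurable lebesgue torus_box u"
  have c: "continuous_on UNIV (\<lambda>y::real. y^2)"
    using continuous_on_power[OF continuous_on_id, of UNIV 2] by simp
  show ?thesis using sbm_comp0[OF a c] by simp
qed

lemma L2B_diff:
  assumes "L2B u" "L2B v"
  shows "L2B (\<lambda>x. u x - v x)" "NN (\<lambda>x. u x - v x) \<le> 2 * NN u + 2 * NN v"
proof -
  have m: "set_borel_measurable lebesgue torus_box (\<lambda>x. u x - v x)"
    using assms by (auto simp: L2B_def intro: sbm_diff)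
  have i: "set_integrable lebesgue torus_box (\<lambda>x. 2 * (u x)^2 + 2 * (v x)^2)"
    using assms unfolding L2B_def by (intro set_integral_add set_integrable_mult_right) auto
  have i2: "set_integrable lebesgue torus_box (\<lambda>x. (u x - v x)^2)"
    by (rule set_integrable_bound[OF i L2B_sq_sbm[OF m]]) (auto intro!: AE_I2 simp: sq_diff_le)
  then show "L2B (\<lambda>x. u x - v x)" using m by (simp add: L2B_def)
  have "NN (\<lambda>x. u x - v x) \<le> (LINT x:torus_box|lebesgue. 2 * (u x)^2 + 2 * (v x)^2)"
    by (rule set_integral_mono[OF i2 i]) (simp add: sq_diff_le)
  also have "\<dots> = 2 * NN u + 2 * NN v"
    using assms unfolding L2B_def by (subst set_integral_add) auto
  finally show "NN (\<lambda>x. u x - v x) \<le> 2 * NN u + 2 * NN v" .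
qed

lemma L2B_add:
  assumes "L2B u" "L2B v"
  shows "L2B (\<lambda>x. u x + v x)" "NN (\<lambda>x. u x + v x) \<le> 2 * NN u + 2 * NN v"
proof -
  have m: "set_borel_measurable lebesgue torus_box (\<lambda>x. u x + v x)"
    using assms by (auto simp: L2B_def intro: sbm_add)
  have i: "set_integrable lebesgue torus_box (\<lambda>x. 2 * (u x)^2 + 2 * (v x)^2)"
    using assms unfolding L2B_def by (intro set_integral_add set_integrable_mult_right) auto
  have i2: "set_integrable lebesgue torus_box (\<lambda>x. (u x + v x)^2)"
    by (rule set_integrable_bound[OF i L2B_sq_sbm[OF m]]) (auto intro!: AE_I2 simp: sq_add_le)
  then show "L2B (\<lambda>x. u x + v x)" using m by (simp add: L2B_def)
  have "NN (\<lambda>x. u x + v x) \<le> (LINT x:torus_box|lebesgue. 2 * (u x)^2 + 2 * (v x)^2)"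
    by (rule set_integral_mono[OF i2 i]) (simp add: sq_add_le)
  also have "\<dots> = 2 * NN u + 2 * NN v"
    using assms unfolding L2B_def by (subst set_integral_add) auto
  finally show "NN (\<lambda>x. u x + v x) \<le> 2 * NN u + 2 * NN v" .
qed

lemma L2B_bdd:
  assumes "set_borel_measurable lebesgue torus_box u" "\<And>x. x \<in> torus_box \<Longrightarrow> \<bar>u x\<bar> \<le> C"
  shows "L2B u" "NN u \<le> C^2 * measure lebesgue torus_box"
proof -
  have b: "(u x)^2 \<le> C^2" if "x \<in> torus_box" for x
    using assms(2)[OF that] by (metis abs_ge_zero abs_le_square_iff order_trans power2_abs power_mono)
  have i: "set_integrable lebesgue torus_box (\<lambda>x. (u x)^2)"
    by (rule bdd_si[OF L2B_sq_sbm[OF assms(1)], of "C^2"]) (use b in auto)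
  then show "L2B u" using assms(1) by (simp add: L2B_def)
  have "NN u \<le> (LINT x:torus_box|lebesgue. C^2)"
    by (rule set_integral_mono[OF i const_si]) (rule b)
  also have "\<dots> = C^2 * measure lebesgue torus_box"
    using TB_sets TB_fin by (simp add: set_integral_const)
  finally show "NN u \<le> C^2 * measure lebesgue torus_box" .
qed

lemma L2B_cont:
  assumes "continuous_on UNIV u"
  shows "L2B u"
proof -
  have "compact (u ` torus_box)" using TB_compact assms
    by (meson compact_continuous_image continuous_on_subset subset_UNIV)
  then obtain C where "\<forall>y \<in> u ` torus_box. norm y \<le> C"
    using compact_imp_bounded bounded_iff by metis
  then show ?thesis using L2B_bdd(1)[OF sbm_of_bm[OF cont_lebesgue[OF assms]], of C] by auto
qed

lemma DC:
  fixes u :: "nat \<Rightarrow> real \<times> real \<Rightarrow> real" and v w :: "real \<times> real \<Rightarrow> real"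
  assumes um: "\<And>n. set_borel_measurable lebesgue torus_box (u n)"
    and vm: "set_borel_measurable lebesgue torus_box v"
    and w: "L2B w"
    and ub: "\<And>n x. x \<in> torus_box \<Longrightarrow> \<bar>u n x\<bar> \<le> w x"
    and vb: "\<And>x. x \<in> torus_box \<Longrightarrow> \<bar>v x\<bar> \<le> w x"
    and conv: "AE x in lebesgue. x \<in> torus_box \<longrightarrow> (\<lambda>n. u n x) \<longlonglongrightarrow> v x"
  shows "(\<lambda>n. NN (\<lambda>x. u n x - v x)) \<longlonglongrightarrow> 0"
proof -
  let ?s = "\<lambda>n x. indicator torus_box x *\<^sub>R (u n x - v x)^2"
  let ?w = "\<lambda>x. indicator torus_box x *\<^sub>R (4 * (w x)^2)"
  have "(\<lambda>n. integral\<^sup>L lebesgue (?s n)) \<longlonglongrightarrow> integral\<^sup>L lebesgue (\<lambda>x::real\<times>real. 0::real)"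
  proof (rule Bochner_Integration.integral_dominated_convergence[where w = ?w])
    show "(\<lambda>x::real\<times>real. 0::real) \<in> borel_measurable lebesgue" by simp
    show "?s n \<in> borel_measurable lebesgue" for n
      using L2B_sq_sbm[OF sbm_diff[OF um vm]] unfolding set_borel_measurable_def .
    show "integrable lebesgue ?w"
    proof -
      have "integrable lebesgue (\<lambda>x. 4 * (indicator torus_box x *\<^sub>R (w x)^2))"
        using w unfolding L2B_def set_integrable_def by (intro integrable_mult_right) auto
      then show ?thesis by (simp add: mult.left_commute)
    qed
    show "AE x in lebesgue. (\<lambda>n. ?s n x) \<longlonglongrightarrow> 0"
      using conv
    proof eventually_elim
      case (elim x)
      show ?case
      proof (cases "x \<in> torus_box")
        case True
        then have "(\<lambda>n. (u n x - v x)^2) \<longlonglongrightarrow> (v x - v x)^2"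
          using elim by (intro tendsto_intros) auto
        then show ?thesis using True by simp
      next
        case False then show ?thesis by simp
      qed
    qed
    show "AE x in lebesgue. norm (?s n x) \<le> ?w x" for n
    proof (rule AE_I2)
      fix x show "norm (?s n x) \<le> ?w x"
      proof (cases "x \<in> torus_box")
        case True
        have "\<bar>u n x - v x\<bar> \<le> 2 * w x" using ub[OF True, of n] vb[OF True] by linarith
        then have "(u n x - v x)^2 \<le> (2 * w x)^2"
          by (metis abs_ge_zero abs_le_square_iff order_trans power2_abs power_mono)
        then show ?thesis using True by (simp add: power_mult_distrib)
      next
        case False then show ?thesis by simp
      qed
    qed
  qed
  then show ?thesis unfolding set_lebesgue_integral_def by simp
qed

definition trunc :: "real \<Rightarrow> real \<Rightarrow> real" where
  "trunc M y = max (- M) (min M y)"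

lemma trunc_cont: "continuous_on UNIV (trunc M)"
  unfolding trunc_def by (intro continuous_intros)

lemma trunc_bound: "0 \<le> M \<Longrightarrow> \<bar>trunc M y\<bar> \<le> M"
  by (simp add: trunc_def)

lemma trunc_le: "0 \<le> M \<Longrightarrow> \<bar>trunc M y\<bar> \<le> \<bar>y\<bar>"
  by (simp add: trunc_def)

lemma trunc_id: "\<bar>y\<bar> \<le> M \<Longrightarrow> trunc M y = y"
  by (simp add: trunc_def)

lemma trunc_zero: "0 \<le> M \<Longrightarrow> trunc M 0 = 0"
  by (simp add: trunc_def)

lemma step_trunc:
  assumes f: "L2B f" and e: "0 < e"
  shows "\<exists>M\<ge>0. NN (\<lambda>x. trunc M (f x) - f x) < e"
proof -
  have fm: "set_borel_measurable lebesgue torus_box f" using f by (simp add: L2B_def)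
  have wL: "L2B (\<lambda>x. \<bar>f x\<bar>)"
    using f sbm_comp0[OF fm continuous_on_rabs[OF continuous_on_id]] by (simp add: L2B_def)
  have "(\<lambda>n. NN (\<lambda>x. trunc (real n) (f x) - f x)) \<longlonglongrightarrow> 0"
  proof (rule DC[OF _ fm wL])
    show "set_borel_measurable lebesgue torus_box (\<lambda>x. trunc (real n) (f x))" for n
      by (rule sbm_comp0[OF fm trunc_cont trunc_zero]) simp
    show "\<bar>trunc (real n) (f x)\<bar> \<le> \<bar>f x\<bar>" for n x by (rule trunc_le) simp
    show "\<bar>f x\<bar> \<le> \<bar>f x\<bar>" for x by simp
    show "AE x in lebesgue. x \<in> torus_box \<longrightarrow> (\<lambda>n. trunc (real n) (f x)) \<longlonglongrightarrow> f x"
    proof (rule AE_I2, rule impI)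
      fix x
      obtain N :: nat where "\<bar>f x\<bar> \<le> real N" using real_arch_simple by blast
      then have "\<forall>n\<ge>N. trunc (real n) (f x) = f x"
        by (auto intro!: trunc_id)
      then show "(\<lambda>n. trunc (real n) (f x)) \<longlonglongrightarrow> f x"
        by (intro tendsto_eventually) (auto simp: eventually_sequentially)
    qed
  qed
  then obtain n where "NN (\<lambda>x. trunc (real n) (f x) - f x) < e"
    using e by (metis (no_types, lifting) LIMSEQ_D diff_zero le_refl norm_conv_dist real_norm_def abs_less_iff)
  then show ?thesis by (intro exI[of _ "real n"]) auto
qed

lemma negligible_fst: "negligible {x::real\<times>real. fst x = c}"
proof -
  have "{x::real\<times>real. fst x = c} = {x. (1::real, 0::real) \<bullet> x = c}" by (auto simp: inner_prod_def)
  then show ?thesis using negligible_hyperplane[of "(1::real, 0::real)" c] by (simp add: zero_prod_def)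
qed

lemma negligible_snd: "negligible {x::real\<times>real. snd x = c}"
proof -
  have "{x::real\<times>real. snd x = c} = {x. (0::real, 1::real) \<bullet> x = c}" by (auto simp: inner_prod_def)
  then show ?thesis using negligible_hyperplane[of "(0::real, 1::real)" c] by (simp add: zero_prod_def)
qed

definition psi :: "nat \<Rightarrow> real \<Rightarrow> real" where
  "psi n t = max 0 (min 1 (min (real (Suc n) * t) (real (Suc n) * (2*pi - t))))"

lemma psi_cont: "continuous_on UNIV (psi n)"
  unfolding psi_def by (intro continuous_intros)

lemma psi_0: "psi n 0 = 0" and psi_2pi: "psi n (2*pi) = 0"
  by (simp_all add: psi_def)

lemma psi_bounds: "0 \<le> psi n t" "psi n t \<le> 1"
  by (simp_all add: psi_def)

lemma psi_lim:
  assumes "0 < t" "t < 2*pi"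
  shows "(\<lambda>n. psi n t) \<longlonglongrightarrow> 1"
proof -
  define m where "m = min t (2*pi - t)"
  have m: "0 < m" "m \<le> t" "m \<le> 2*pi - t" using assms by (auto simp: m_def)
  obtain K :: nat where K: "1 / m \<le> real K" using real_arch_simple by blast
  have Km: "1 \<le> real K * m" using K m(1) by (simp add: field_simps)
  have "psi n t = 1" if "n \<ge> K" for n
  proof -
    have "real K \<le> real (Suc n)" using that by simp
    then have "real K * m \<le> real (Suc n) * m" using m(1) by (intro mult_right_mono) auto
    moreover have "real (Suc n) * m \<le> real (Suc n) * t" using m(2) by (intro mult_left_mono) auto
    moreover have "real (Suc n) * m \<le> real (Suc n) * (2*pi - t)" using m(3) by (intro mult_left_mono) auto
    ultimately have "1 \<le> real (Suc n) * t" "1 \<le> real (Suc n) * (2*pi - t)" using Km by linarith+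
    then show ?thesis unfolding psi_def by (simp add: min_def max_def)
  qed
  then show ?thesis
    by (intro tendsto_eventually) (auto simp: eventually_sequentially)
qed

lemma step_cont:
  fixes g :: "real \<times> real \<Rightarrow> real"
  assumes gm: "set_borel_measurable lebesgue torus_box g"
    and gb: "\<And>x. x \<in> torus_box \<Longrightarrow> \<bar>g x\<bar> \<le> M" and M: "0 \<le> M" and e: "0 < e"
  shows "\<exists>h. continuous_on UNIV h \<and>
     (\<forall>x. fst x = 0 \<or> fst x = 2*pi \<or> snd x = 0 \<or> snd x = 2*pi \<longrightarrow> h x = 0) \<and>
     NN (\<lambda>x. h x - g x) < e"
proof -
  let ?G = "\<lambda>x. indicator torus_box x *\<^sub>R g x"
  have "?G \<in> borel_measurable lebesgue" using gm by (simp add: set_borel_measurable_def)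
  then have "?G measurable_on torus_box" by (rule lebesgue_measurable_imp_measurable_on[OF _ TB_sets])
  then obtain N gg where N: "negligible N" and ggc: "\<And>n. continuous_on UNIV (gg n)"
    and ggl: "\<And>x. x \<notin> N \<Longrightarrow> (\<lambda>n. gg n x) \<longlonglongrightarrow> (if x \<in> torus_box then ?G x else 0)"
    unfolding measurable_on_def by blast
  define u where "u n x = psi n (fst x) * psi n (snd x) * trunc M (gg n x)" for n x
  have uc: "continuous_on UNIV (u n)" for n
  proof -
    have "continuous_on UNIV (\<lambda>x. trunc M (gg n x))"
      unfolding trunc_def by (intro continuous_intros ggc)
    moreover have "continuous_on UNIV (\<lambda>x. psi n (fst x))"
      by (rule continuous_on_compose2[OF psi_cont]) (auto intro: continuous_intros)
    moreover have "continuous_on UNIV (\<lambda>x. psi n (snd x))"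
      by (rule continuous_on_compose2[OF psi_cont]) (auto intro: continuous_intros)
    ultimately show ?thesis unfolding u_def by (intro continuous_intros)
  qed
  have ub: "\<bar>u n x\<bar> \<le> M" for n x
  proof -
    have "\<bar>u n x\<bar> = psi n (fst x) * psi n (snd x) * \<bar>trunc M (gg n x)\<bar>"
      using psi_bounds unfolding u_def by (simp add: abs_mult)
    also have "\<dots> \<le> 1 * 1 * M"
      using psi_bounds trunc_bound[OF M] by (intro mult_mono) auto
    finally show ?thesis by simp
  qed
  have wL: "L2B (\<lambda>x. M)" by (rule L2B_cont) (intro continuous_intros)
  have "(\<lambda>n. NN (\<lambda>x. u n x - g x)) \<longlonglongrightarrow> 0"
  proof (rule DC[OF _ gm wL])
    show "set_borel_measurable lebesgue torus_box (u n)" for n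
      by (rule sbm_of_bm[OF cont_lebesgue[OF uc]])
    show "\<bar>u n x\<bar> \<le> M" for n x by (rule ub)
    show "\<bar>g x\<bar> \<le> M" if "x \<in> torus_box" for x using gb[OF that] .
    let ?N' = "N \<union> {x. fst x = 0} \<union> {x. fst x = 2*pi} \<union> {x. snd x = 0} \<union> {x. snd x = 2*pi}"
    have "negligible ?N'"
      using N negligible_fst negligible_snd by (intro negligible_Un) auto
    then have N': "?N' \<in> null_sets lebesgue" by (simp add: negligible_iff_null_sets)
    have key: "(\<lambda>n. u n x) \<longlonglongrightarrow> g x" if x: "x \<notin> ?N'" "x \<in> torus_box" for x
    proof -
      obtain a b where ab: "x = (a, b)" by (cases x)
      have ab2: "0 < a" "a < 2*pi" "0 < b" "b < 2*pi" using x ab by (auto simp: torus_box_def)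
      have "(\<lambda>n. gg n x) \<longlonglongrightarrow> g x" using ggl[of x] x by simp
      then have "(\<lambda>n. trunc M (gg n x)) \<longlonglongrightarrow> trunc M (g x)"
        unfolding trunc_def by (intro tendsto_intros)
      then have "(\<lambda>n. trunc M (gg n x)) \<longlonglongrightarrow> g x" using trunc_id[OF gb[OF x(2)]] by simp
      moreover have "(\<lambda>n. psi n (fst x)) \<longlonglongrightarrow> 1" using ab ab2 psi_lim by simp
      moreover have "(\<lambda>n. psi n (snd x)) \<longlonglongrightarrow> 1" using ab ab2 psi_lim by simp
      ultimately have "(\<lambda>n. psi n (fst x) * psi n (snd x) * trunc M (gg n x)) \<longlonglongrightarrow> 1 * 1 * g x"
        by (intro tendsto_intros)
      then show "(\<lambda>n. u n x) \<longlonglongrightarrow> g x" unfolding u_def by simp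
    qed
    show "AE x in lebesgue. x \<in> torus_box \<longrightarrow> (\<lambda>n. u n x) \<longlonglongrightarrow> g x"
      by (rule AE_I'[OF N']) (use key in blast)
  qed
  then obtain n where n: "NN (\<lambda>x. u n x - g x) < e"
    using e by (metis (no_types, lifting) LIMSEQ_D diff_zero le_refl norm_conv_dist real_norm_def abs_less_iff)
  have "\<forall>x. fst x = 0 \<or> fst x = 2*pi \<or> snd x = 0 \<or> snd x = 2*pi \<longrightarrow> u n x = 0"
    unfolding u_def using psi_0 psi_2pi by auto
  then show ?thesis using uc n by blast
qed

lemma angle_eq:
  fixes a b :: real
  assumes "0 \<le> a" "a \<le> 2*pi" "0 \<le> b" "b \<le> 2*pi" "cos a = cos b" "sin a = sin b"
  shows "a = b \<or> ((a = 0 \<or> a = 2*pi) \<and> (b = 0 \<or> b = 2*pi))"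
proof -
  obtain n :: int where n: "a = b + 2 * pi * n" using sin_cos_eq_iff assms(5,6) by metis
  consider "n = 0" | "n \<ge> 1" | "n \<le> -1" by linarith
  then show ?thesis
  proof cases
    case 1 then show ?thesis using n by simp
  next
    case 2
    then have "real_of_int n \<ge> 1" by simp
    then have "2 * pi * n \<ge> 2 * pi * 1" using pi_gt_zero by (intro mult_left_mono) auto
    then have "a = 2*pi \<and> b = 0" using n assms by linarith
    then show ?thesis by simp
  next
    case 3
    then have "real_of_int n \<le> -1" by simp
    then have "2 * pi * n \<le> 2 * pi * (-1)" using pi_gt_zero by (intro mult_left_mono) auto
    then have "a = 0 \<and> b = 2*pi" using n assms by linarith
    then show ?thesis by simp
  qed
qed

lemma phi_wd:
  fixes h :: "real \<times> real \<Rightarrow> real"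
  assumes hz: "\<forall>x. fst x = 0 \<or> fst x = 2*pi \<or> snd x = 0 \<or> snd x = 2*pi \<longrightarrow> h x = 0"
    and x: "x \<in> torus_box" and y: "y \<in> torus_box" and p: "phi x = phi y"
  shows "h x = h y"
proof -
  obtain a b where xab: "x = (a, b)" by (cases x)
  obtain c d where ycd: "y = (c, d)" by (cases y)
  have r: "0 \<le> a" "a \<le> 2*pi" "0 \<le> b" "b \<le> 2*pi" "0 \<le> c" "c \<le> 2*pi" "0 \<le> d" "d \<le> 2*pi"
    using x y xab ycd by (auto simp: torus_box_def)
  have e: "cos a = cos c" "sin a = sin c" "cos b = cos d" "sin b = sin d"
    using p xab ycd by (auto simp: phi_def)
  have 1: "a = c \<or> ((a = 0 \<or> a = 2*pi) \<and> (c = 0 \<or> c = 2*pi))"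
    using angle_eq[OF r(1,2,5,6) e(1,2)] .
  have 2: "b = d \<or> ((b = 0 \<or> b = 2*pi) \<and> (d = 0 \<or> d = 2*pi))"
    using angle_eq[OF r(3,4,7,8) e(3,4)] .
  show ?thesis
  proof (cases "a = c \<and> b = d")
    case True then show ?thesis using xab ycd by simp
  next
    case False
    then have "h x = 0" "h y = 0" using 1 2 hz xab ycd by auto
    then show ?thesis by simp
  qed
qed

lemma phi_cont: "continuous_on S phi"
  unfolding phi_def by (intro continuous_intros)

lemma step_poly:
  fixes h :: "real \<times> real \<Rightarrow> real"
  assumes hc: "continuous_on UNIV h"
    and hz: "\<forall>x. fst x = 0 \<or> fst x = 2*pi \<or> snd x = 0 \<or> snd x = 2*pi \<longrightarrow> h x = 0"
    and e: "0 < e"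
  shows "\<exists>P. real_polynomial_function P \<and> (\<forall>x\<in>torus_box. \<bar>h x - P (phi x)\<bar> < e)"
proof -
  let ?T = "phi ` torus_box"
  have Tc: "compact ?T" by (rule compact_continuous_image[OF phi_cont TB_compact])
  define H where "H p = h (SOME x. x \<in> torus_box \<and> phi x = p)" for p
  have HH: "H (phi x) = h x" if x: "x \<in> torus_box" for x
  proof -
    have "\<exists>y. y \<in> torus_box \<and> phi y = phi x" using x by blast
    then have "(SOME y. y \<in> torus_box \<and> phi y = phi x) \<in> torus_box \<and>
               phi (SOME y. y \<in> torus_box \<and> phi y = phi x) = phi x"
      by (rule someI_ex)
    then show ?thesis unfolding H_def using phi_wd[OF hz _ x] by auto
  qed
  have isc: "\<forall>x. isCont h x" using hc by (simp add: continuous_on_eq_continuous_at)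
  have Hc: "continuous_on ?T H"
  proof (subst continuous_on_closed_vimage[OF compact_imp_closed[OF Tc]], intro allI impI)
    fix C :: "real set" assume C: "closed C"
    have eq: "H -` C \<inter> ?T = phi ` (torus_box \<inter> h -` C)"
      using HH by auto
    have "closed (h -` C)" using C isc by (intro continuous_closed_vimage) auto
    then have "compact (torus_box \<inter> h -` C)" by (rule compact_Int_closed[OF TB_compact])
    then have "compact (phi ` (torus_box \<inter> h -` C))"
      by (rule compact_continuous_image[OF phi_cont])
    then show "closed (H -` C \<inter> ?T)" unfolding eq by (rule compact_imp_closed)
  qed
  obtain g where g: "polynomial_function g" "\<forall>p\<in>?T. norm (H p - g p) < e"
    using Stone_Weierstrass_polynomial_function[OF Tc Hc e] by blast
  have "real_polynomial_function g" using g(1) by (simp add: real_polynomial_function_eq)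
  moreover have "\<forall>x\<in>torus_box. \<bar>h x - g (phi x)\<bar> < e"
    using g(2) HH by auto
  ultimately show ?thesis by blast
qed

lemma trig_period:
  fixes c :: real and m :: int
  shows "cos (c + real_of_int m * (2*pi)) = cos c" "sin (c + real_of_int m * (2*pi)) = sin c"
proof -
  have "c + real_of_int m * (2*pi) = c + 2 * pi * real_of_int m" by simp
  then have "sin (c + real_of_int m * (2*pi)) = sin c \<and> cos (c + real_of_int m * (2*pi)) = cos c"
    using sin_cos_eq_iff by metis
  then show "cos (c + real_of_int m * (2*pi)) = cos c" "sin (c + real_of_int m * (2*pi)) = sin c" by auto
qed

lemma int1_sin:
  fixes c a :: real and m :: int
  assumes "m \<noteq> 0"
  shows "integral {0..2*pi} (\<lambda>y. a * sin (c + real_of_int m * y)) = 0"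
proof -
  let ?F = "\<lambda>y. - a * cos (c + real_of_int m * y) / real_of_int m"
  have "((\<lambda>y. a * sin (c + real_of_int m * y)) has_integral (?F (2*pi) - ?F 0)) {0..2*pi}"
  proof (rule fundamental_theorem_of_calculus)
    show "0 \<le> 2*pi" by simp
    fix y :: real
    have "(?F has_real_derivative a * sin (c + real_of_int m * y)) (at y within {0..2*pi})"
      using assms by (auto intro!: derivative_eq_intros simp: field_simps)
    then show "(?F has_vector_derivative a * sin (c + real_of_int m * y)) (at y within {0..2*pi})"
      by (simp add: has_real_derivative_iff_has_vector_derivative)
  qed
  moreover have "?F (2*pi) - ?F 0 = 0" by (simp add: trig_period)
  ultimately show ?thesis by (metis integral_unique)
qed

lemma int1_cos:
  fixes c a :: real and m :: int
  assumes "m \<noteq> 0"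
  shows "integral {0..2*pi} (\<lambda>y. a * cos (c + real_of_int m * y)) = 0"
proof -
  let ?F = "\<lambda>y. a * sin (c + real_of_int m * y) / real_of_int m"
  have "((\<lambda>y. a * cos (c + real_of_int m * y)) has_integral (?F (2*pi) - ?F 0)) {0..2*pi}"
  proof (rule fundamental_theorem_of_calculus)
    show "0 \<le> 2*pi" by simp
    fix y :: real
    have "(?F has_real_derivative a * cos (c + real_of_int m * y)) (at y within {0..2*pi})"
      using assms by (auto intro!: derivative_eq_intros simp: field_simps)
    then show "(?F has_vector_derivative a * cos (c + real_of_int m * y)) (at y within {0..2*pi})"
      by (simp add: has_real_derivative_iff_has_vector_derivative)
  qed
  moreover have "?F (2*pi) - ?F 0 = 0" by (simp add: trig_period)
  ultimately show ?thesis by (metis integral_unique)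
qed

lemma int1:
  fixes c a :: real and m :: int
  assumes "m \<noteq> 0" "F = sin \<or> F = cos"
  shows "integral {0..2*pi} (\<lambda>y. a * F (c + real_of_int m * y)) = 0"
  using assms(2)
proof
  assume "F = sin" then show ?thesis using int1_sin[OF assms(1)] by simp
next
  assume "F = cos" then show ?thesis using int1_cos[OF assms(1)] by simp
qed

lemma ek_F: "ek k x = (if k \<in> Zplus then sin else cos) (kdot k x)"
  by (simp add: ek_kdot)

lemma ek_cont: "continuous_on S (ek k)"
proof -
  have "continuous_on S (\<lambda>x. (if k \<in> Zplus then sin else cos) (kdot k x))"
    unfolding kdot_def by (cases "k \<in> Zplus") (auto intro!: continuous_intros)
  then show ?thesis unfolding ek_F .
qed

lemma ek_si: "set_integrable lebesgue torus_box (ek k)"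
  by (rule bdd_si[OF sbm_of_bm[OF cont_lebesgue[OF ek_cont]], where C = 1]) (simp add: ek_def Let_def)

lemma ek_int0:
  assumes "k \<noteq> 0"
  shows "(LINT x:torus_box|lebesgue. ek k x) = 0"
proof -
  obtain k1 k2 where k: "k = (k1, k2)" by (cases k)
  define F :: "real \<Rightarrow> real" where "F = (if k \<in> Zplus then sin else cos)"
  have F: "F = sin \<or> F = cos" by (simp add: F_def)
  have "(LINT x:torus_box|lebesgue. ek k x) = integral torus_box (ek k)"
    by (rule set_lebesgue_integral_eq_integral(2)[OF ek_si])
  also have "\<dots> = integral (cbox 0 (2*pi)) (\<lambda>x. integral (cbox 0 (2*pi)) (\<lambda>y. ek k (x, y)))"
    unfolding TB_eq by (rule integral_prod_continuous[OF ek_cont])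
  also have "\<dots> = integral {0..2*pi} (\<lambda>x. integral {0..2*pi} (\<lambda>y. 1 * F (real_of_int k1 * x + real_of_int k2 * y)))"
    by (simp add: ek_F F_def kdot_def k)
  also have "\<dots> = 0"
  proof (cases "k2 = 0")
    case False
    then show ?thesis by (simp only: int1[OF False F]) simp
  next
    case True
    then have "k1 \<noteq> 0" using assms k by (auto simp: zero_prod_def)
    have "integral {0..2*pi} (\<lambda>x. integral {0..2*pi} (\<lambda>y. 1 * F (real_of_int k1 * x + real_of_int k2 * y)))
        = integral {0..2*pi} (\<lambda>x. (2*pi) * F (0 + real_of_int k1 * x))"
      using True by simp
    also have "\<dots> = 0" by (rule int1[OF \<open>k1 \<noteq> 0\<close> F])
    finally show ?thesis .
  qed
  finally show ?thesis .
qed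

lemma cont_si:
  assumes "continuous_on UNIV (u :: real \<times> real \<Rightarrow> real)"
  shows "set_integrable lebesgue torus_box u"
proof -
  have "compact (u ` torus_box)" using TB_compact assms
    by (meson compact_continuous_image continuous_on_subset subset_UNIV)
  then obtain C where "\<forall>y \<in> u ` torus_box. norm y \<le> C"
    using compact_imp_bounded bounded_iff by metis
  then show ?thesis using bdd_si[OF sbm_of_bm[OF cont_lebesgue[OF assms]], of C] by auto
qed

lemma L2zero_L2B: "f \<in> L2zero \<Longrightarrow> L2B f"
  by (simp add: L2zero_def L2B_def)

lemma L2zero_si: 
  assumes "f \<in> L2zero" shows "set_integrable lebesgue torus_box f"
proof -
  have fm: "set_borel_measurable lebesgue torus_box f" and f2: "set_integrable lebesgue torus_box (\<lambda>x. (f x)^2)"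
    using assms by (auto simp: L2zero_def)
  have i: "set_integrable lebesgue torus_box (\<lambda>x. 1 + (f x)^2)"
    using const_si f2 by (rule set_integral_add)
  have b: "\<bar>y\<bar> \<le> 1 + y^2" for y :: real
  proof (cases "\<bar>y\<bar> \<le> 1")
    case True then show ?thesis by (smt (verit) zero_le_power2)
  next
    case False
    then have "\<bar>y\<bar> * 1 \<le> \<bar>y\<bar> * \<bar>y\<bar>" by (intro mult_left_mono) auto
    then show ?thesis by (simp add: power2_eq_square abs_mult_self_eq)
  qed
  show ?thesis
    by (rule set_integrable_bound[OF i fm]) (auto intro!: AE_I2 simp: b)
qed

lemma S_cont: "continuous_on UNIV (\<lambda>x. (\<Sum>k\<in>F. c k * ek k x))"
  by (intro continuous_intros continuous_on_mult_left ek_cont)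

lemma S_int0:
  assumes "finite F" "F \<subseteq> Zzero"
  shows "(LINT x:torus_box|lebesgue. (\<Sum>k\<in>F. c k * ek k x)) = 0"
proof -
  have "(LINT x:torus_box|lebesgue. (\<Sum>k\<in>F. c k * ek k x))
      = integral\<^sup>L lebesgue (\<lambda>x. \<Sum>k\<in>F. indicator torus_box x *\<^sub>R (c k * ek k x))"
    unfolding set_lebesgue_integral_def by (simp add: sum_distrib_left)
  also have "\<dots> = (\<Sum>k\<in>F. integral\<^sup>L lebesgue (\<lambda>x. indicator torus_box x *\<^sub>R (c k * ek k x)))"
  proof (rule Bochner_Integration.integral_sum)
    fix k assume "k \<in> F"
    show "integrable lebesgue (\<lambda>x. indicator torus_box x *\<^sub>R (c k * ek k x))"
      using set_integrable_mult_right[OF ek_si, of "c k" k] unfolding set_integrable_def by simp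
  qed
  also have "\<dots> = (\<Sum>k\<in>F. c k * (LINT x:torus_box|lebesgue. ek k x))"
    by (intro sum.cong refl) (simp only: set_lebesgue_integral_def[symmetric] set_integral_mult_right)
  also have "\<dots> = 0"
    using assms ek_int0 by (auto simp: Zzero_iff intro!: sum.neutral)
  finally show ?thesis .
qed

lemma drop_const:
  assumes f: "f \<in> L2zero" and F: "finite F" "F \<subseteq> Zzero"
  shows "NN (\<lambda>x. f x - (\<Sum>k\<in>F. c k * ek k x)) \<le> NN (\<lambda>x. f x - (c0 + (\<Sum>k\<in>F. c k * ek k x)))"
proof -
  define S where "S x = (\<Sum>k\<in>F. c k * ek k x)" for x
  define r where "r x = f x - (c0 + S x)" for x
  let ?mu = "measure lebesgue torus_box"
  have Sc: "continuous_on UNIV S" unfolding S_def by (rule S_cont)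
  have cSc: "continuous_on UNIV (\<lambda>x. c0 + S x)" using Sc by (intro continuous_intros)
  have rL: "L2B r" unfolding r_def by (rule L2B_diff(1)[OF L2zero_L2B[OF f] L2B_cont[OF cSc]])
  have fi: "set_integrable lebesgue torus_box f" by (rule L2zero_si[OF f])
  have f0: "(LINT x:torus_box|lebesgue. f x) = 0" using f by (simp add: L2zero_def)
  have ri: "set_integrable lebesgue torus_box r"
    unfolding r_def by (rule set_integral_diff(1)[OF fi cont_si[OF cSc]])
  have S0: "(LINT x:torus_box|lebesgue. S x) = 0" unfolding S_def by (rule S_int0[OF F])
  have cS: "(LINT x:torus_box|lebesgue. c0 + S x) = c0 * ?mu"
    using set_integral_add(2)[OF const_si cont_si[OF Sc]] S0 TB_sets TB_fin
    by (simp add: set_integral_const)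
  have rint: "(LINT x:torus_box|lebesgue. r x) = - c0 * ?mu"
    unfolding r_def using set_integral_diff(2)[OF fi cont_si[OF cSc]] f0 cS by simp
  have r2i: "set_integrable lebesgue torus_box (\<lambda>x. (r x)^2)" using rL by (simp add: L2B_def)
  have i2: "set_integrable lebesgue torus_box (\<lambda>x. 2 * c0 * r x + c0^2)"
    using ri const_si by (intro set_integral_add set_integrable_mult_right) auto
  have "NN (\<lambda>x. f x - S x) = (LINT x:torus_box|lebesgue. (r x)^2 + (2 * c0 * r x + c0^2))"
    by (intro set_lebesgue_integral_cong) (auto simp: r_def power2_eq_square algebra_simps TB_sets)
  also have "\<dots> = NN r + (LINT x:torus_box|lebesgue. 2 * c0 * r x + c0^2)"
    by (rule set_integral_add(2)[OF r2i i2])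
  also have "(LINT x:torus_box|lebesgue. 2 * c0 * r x + c0^2) = 2 * c0 * (- c0 * ?mu) + c0^2 * ?mu"
    using set_integral_add(2)[OF set_integrable_mult_right[OF ri, of "2 * c0"] const_si[of "c0^2"]] rint
      TB_sets TB_fin by (simp add: set_integral_const)
  also have "\<dots> = - (c0^2 * ?mu)" by (simp add: power2_eq_square algebra_simps)
  also have "NN r + - (c0^2 * ?mu) \<le> NN r" by simp
  finally show ?thesis unfolding S_def r_def .
qed

lemma approx_main:
  assumes f: "f \<in> L2zero" and e: "0 < e"
  shows "\<exists>F c. finite F \<and> F \<subseteq> Zzero \<and> NN (\<lambda>x. f x - (\<Sum>k\<in>F. c k * ek k x)) < e"
proof -
  have fL: "L2B f" by (rule L2zero_L2B[OF f])
  have fm: "set_borel_measurable lebesgue torus_box f" using fL by (simp add: L2B_def)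
  obtain M where M: "0 \<le> M" and M1: "NN (\<lambda>x. trunc M (f x) - f x) < e / 6"
    using step_trunc[OF fL, of "e / 6"] e by auto
  define g where "g x = trunc M (f x)" for x
  have gm: "set_borel_measurable lebesgue torus_box g"
    unfolding g_def by (rule sbm_comp0[OF fm trunc_cont trunc_zero[OF M]])
  have gb: "\<bar>g x\<bar> \<le> M" for x unfolding g_def by (rule trunc_bound[OF M])
  obtain h where hc: "continuous_on UNIV h"
    and hz: "\<forall>x. fst x = 0 \<or> fst x = 2*pi \<or> snd x = 0 \<or> snd x = 2*pi \<longrightarrow> h x = 0"
    and h1: "NN (\<lambda>x. h x - g x) < e / 12"
    using step_cont[OF gm gb M, of "e / 12"] e by auto
  define mu where "mu = measure lebesgue torus_box"
  have mu: "0 \<le> mu" by (simp add: mu_def)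
  define eta where "eta = sqrt (e / (12 * (mu + 1)))"
  have eta: "0 < eta" using e mu by (simp add: eta_def)
  have eta2: "eta^2 * mu \<le> e / 12"
  proof -
    have "eta^2 = e / (12 * (mu + 1))" using e mu by (simp add: eta_def)
    then have "eta^2 * mu = e / 12 * (mu / (mu + 1))" by (simp add: field_simps)
    also have "\<dots> \<le> e / 12 * 1" using e mu by (intro mult_left_mono) auto
    finally show ?thesis by simp
  qed
  obtain P where P: "real_polynomial_function P" and Pb: "\<forall>x\<in>torus_box. \<bar>h x - P (phi x)\<bar> < eta"
    using step_poly[OF hc hz eta] by blast
  obtain c0 F c where F: "finite F" "F \<subseteq> Zzero" and Pe: "\<forall>x. P (phi x) = c0 + (\<Sum>k\<in>F. c k * ek k x)"
    using tp_repr[OF tp_poly[OF P]] by blast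
  have Pc: "continuous_on UNIV (\<lambda>x. P (phi x))"
  proof -
    have "continuous_on UNIV P" using P by (simp add: real_polynomial_function_eq continuous_on_polymonial_function)
    then have "continuous_on (range phi) P" by (rule continuous_on_subset) simp
    then show ?thesis using continuous_on_compose[OF phi_cont, of UNIV P] by (simp add: o_def)
  qed
  define a1 where "a1 x = f x - g x" for x
  define a2 where "a2 x = g x - h x" for x
  define a3 where "a3 x = h x - P (phi x)" for x
  have gL: "L2B g" using L2B_bdd(1)[OF gm, of M] gb by blast
  have hL: "L2B h" by (rule L2B_cont[OF hc])
  have a1L: "L2B a1" unfolding a1_def by (rule L2B_diff(1)[OF fL gL])
  have a2L: "L2B a2" unfolding a2_def by (rule L2B_diff(1)[OF gL hL])
  have a3m: "set_borel_measurable lebesgue torus_box a3"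
    unfolding a3_def by (rule sbm_of_bm[OF cont_lebesgue]) (intro continuous_intros hc Pc)
  have a3b: "\<bar>a3 x\<bar> \<le> eta" if "x \<in> torus_box" for x using Pb that unfolding a3_def by force
  have a3L: "L2B a3" by (rule L2B_bdd(1)[OF a3m a3b])
  have N3: "NN a3 \<le> e / 12"
    using L2B_bdd(2)[OF a3m a3b] eta2 unfolding mu_def by linarith
  have N1: "NN a1 < e / 6"
  proof -
    have "NN a1 = NN (\<lambda>x. trunc M (f x) - f x)" unfolding a1_def g_def by (simp add: power2_commute)
    then show ?thesis using M1 by simp
  qed
  have N2: "NN a2 < e / 12"
  proof -
    have "NN a2 = NN (\<lambda>x. h x - g x)" unfolding a2_def by (simp add: power2_commute)
    then show ?thesis using h1 by simp
  qed
  have a23L: "L2B (\<lambda>x. a2 x + a3 x)" by (rule L2B_add(1)[OF a2L a3L])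
  have N23: "NN (\<lambda>x. a2 x + a3 x) \<le> 2 * NN a2 + 2 * NN a3" by (rule L2B_add(2)[OF a2L a3L])
  have N123: "NN (\<lambda>x. a1 x + (a2 x + a3 x)) \<le> 2 * NN a1 + 2 * NN (\<lambda>x. a2 x + a3 x)"
    by (rule L2B_add(2)[OF a1L a23L])
  have eqf: "f x - (c0 + (\<Sum>k\<in>F. c k * ek k x)) = a1 x + (a2 x + a3 x)" for x
    using Pe[rule_format, of x] unfolding a1_def a2_def a3_def by simp
  have "NN (\<lambda>x. f x - (\<Sum>k\<in>F. c k * ek k x)) \<le> NN (\<lambda>x. f x - (c0 + (\<Sum>k\<in>F. c k * ek k x)))"
    by (rule drop_const[OF f F])
  also have "\<dots> = NN (\<lambda>x. a1 x + (a2 x + a3 x))" unfolding eqf ..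
  also have "\<dots> < e" using N123 N23 N1 N2 N3 by linarith
  finally show ?thesis using F by blast
qed

theorem proposition3p2:
  fixes Zs :: "(int \<times> int) set"
  assumes "finite Zs" and "Zs \<subseteq> Zzero"
    and "{(0, 1), (1, 1)} \<subseteq> Z0 Zs"
  shows "S_infty Zs = L2zero"
proof -
  have Z: "Zzero \<subseteq> Zinf Zs" by (rule comb_main[OF assms(3)])
  show ?thesis
    unfolding S_infty_def L2_closed_span_def
  proof (intro set_eqI iffI)
    fix f assume "f \<in> {f \<in> L2zero. \<forall>\<epsilon>>0. \<exists>F c. finite F \<and> F \<subseteq> Zinf Zs \<union> Zs \<and>
        (LINT x:torus_box|lebesgue. (f x - (\<Sum>k\<in>F. c k * ek k x))^2) < \<epsilon>}"
    then show "f \<in> L2zero" by blast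
  next
    fix f assume f: "f \<in> L2zero"
    have "\<forall>\<epsilon>>0. \<exists>F c. finite F \<and> F \<subseteq> Zinf Zs \<union> Zs \<and>
        (LINT x:torus_box|lebesgue. (f x - (\<Sum>k\<in>F. c k * ek k x))^2) < \<epsilon>"
    proof (intro allI impI)
      fix \<epsilon> :: real assume "0 < \<epsilon>"
      then obtain F c where "finite F" "F \<subseteq> Zzero" "NN (\<lambda>x. f x - (\<Sum>k\<in>F. c k * ek k x)) < \<epsilon>"
        using approx_main[OF f] by blast
      then show "\<exists>F c. finite F \<and> F \<subseteq> Zinf Zs \<union> Zs \<and>
        (LINT x:torus_box|lebesgue. (f x - (\<Sum>k\<in>F. c k * ek k x))^2) < \<epsilon>"
        using Z by blast
    qed
    then show "f \<in> {f \<in> L2zero. \<forall>\<epsilon>>0. \<exists>F c. finite F \<and> F \<subseteq> Zinf Zs \<union> Zs \<and>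
        (LINT x:torus_box|lebesgue. (f x - (\<Sum>k\<in>F. c k * ek k x))^2) < \<epsilon>}"
      using f by blast
  qed
qed

end
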